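(* For every integer $m\ge 5$, the independence polynomial $I(T_{m,2};t)$ is unimodal and its mode belongs to $\{\rho_m,\rho_m+1\}$, where $\rho_m$ denotes the mode of the independence polynomial $I(C_m;t)$ of the cycle $C_m$.
   Context: For a simple graph $G$, the independence polynomial is $I(G;t)=\sum_{k\ge 0}s_k(G)t^k$, where $s_k(G)$ is the number of independent sets (sets of pairwise non-adjacent vertices) of size $k$ in $G$. $C_m$ is the cycle on $m$ vertices; its independence polynomial is known to be unimodal. For integers $m\ge 3$, $n\ge 1$, the tadpole graph $T_{m,n}$ is the simple graph with vertex set $\{x_1,\dots,x_m,y_1,\dots,y_n\}$ and edges $\{x_i,x_{i+1}\}$ for $1\le i\le m-1$, $\{x_m,x_1\}$, $\{y_j,y_{j+1}\}$ for $1\le j\le n-1$, and $\{x_m,y_1\}$. A polynomial $\sum a_kt^k$ with nonnegative coefficients is unimodal if $a_0\le\cdots\le a_m\ge a_{m+1}\ge\cdots$ for some $m$; with $a_{-1}=0$, its mode is the unique $i$ with $a_{i-1}<a_i\ge a_{i+1}\ge a_{i+2}\ge\cdots$. *)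

theory Defs
  imports Main
begin

text \<open>A simple graph is given by a vertex set V and a set E of 2-element subsets of V.\<close>

definition indep_set :: "'a set \<Rightarrow> 'a set set \<Rightarrow> 'a set \<Rightarrow> bool" where
  "indep_set V E S \<longleftrightarrow> S \<subseteq> V \<and> (\<forall>e\<in>E. \<not> e \<subseteq> S)"

text \<open>s_k(G): number of independent sets of size k; the coefficient sequence of I(G;t).\<close>
definition indep_coeff :: "'a set \<Rightarrow> 'a set set \<Rightarrow> nat \<Rightarrow> nat" where
  "indep_coeff V E k = card {S. indep_set V E S \<and> card S = k}"

definition cycle_V :: "nat \<Rightarrow> nat set" where
  "cycle_V m = {1..m}"

definition cycle_E :: "nat \<Rightarrow> nat set set" where
  "cycle_E m = {{i, i + 1} | i. 1 \<le> i \<and> i \<le> m - 1} \<union> {{m, 1}}"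

text \<open>Tadpole T_{m,n}: x_i = Inl i (1 \<le> i \<le> m), y_j = Inr j (1 \<le> j \<le> n).\<close>
definition tadpole_V :: "nat \<Rightarrow> nat \<Rightarrow> (nat + nat) set" where
  "tadpole_V m n = Inl ` {1..m} \<union> Inr ` {1..n}"

definition tadpole_E :: "nat \<Rightarrow> nat \<Rightarrow> (nat + nat) set set" where
  "tadpole_E m n =
     {{Inl i, Inl (i + 1)} | i. 1 \<le> i \<and> i \<le> m - 1}
   \<union> {{Inl m, Inl 1}}
   \<union> {{Inr j, Inr (j + 1)} | j. 1 \<le> j \<and> j \<le> n - 1}
   \<union> {{Inl m, Inr 1}}"

definition unimodal :: "(nat \<Rightarrow> nat) \<Rightarrow> bool" where
  "unimodal a \<longleftrightarrow> (\<exists>m. (\<forall>i<m. a i \<le> a (Suc i)) \<and> (\<forall>i\<ge>m. a (Suc i) \<le> a i))"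

definition is_mode :: "(nat \<Rightarrow> nat) \<Rightarrow> nat \<Rightarrow> bool" where
  "is_mode a i \<longleftrightarrow> (if i = 0 then 0 < a 0 else a (i - 1) < a i) \<and> (\<forall>j\<ge>i. a (Suc j) \<le> a j)"

definition mode :: "(nat \<Rightarrow> nat) \<Rightarrow> nat" where
  "mode a = (THE i. is_mode a i)"

end

theory Submission
  imports Defs
begin

definition nc :: "nat set \<Rightarrow> nat set set" where
  "nc A = {S. S \<subseteq> A \<and> (\<forall>i. i \<in> S \<longrightarrow> Suc i \<notin> S)}"

definition F :: "nat \<Rightarrow> nat \<Rightarrow> nat \<Rightarrow> nat" where
  "F a n k = card {S. S \<in> nc {a..<a+n} \<and> card S = k}"

lemma fin_fam: "finite {S. S \<in> nc {a..<b} \<and> P S}"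
proof -
  have "{S. S \<in> nc {a..<b} \<and> P S} \<subseteq> Pow {a..<b}" by (auto simp: nc_def)
  then show ?thesis by (rule finite_subset) simp
qed

lemma F0: "F a 0 k = (if k = 0 then 1 else 0)"
proof -
  have "{S. S \<in> nc {a..<a+0} \<and> card S = k} = (if k = 0 then {{}} else {})"
    by (auto simp: nc_def)
  then show ?thesis by (simp add: F_def)
qed

lemma F1: "F a 1 k = (if k \<le> 1 then 1 else 0)"
proof -
  have s: "\<And>S. S \<subseteq> {a} \<longleftrightarrow> S = {} \<or> S = {a}" by auto
  have "{S. S \<in> nc {a..<a+1} \<and> card S = k} = (if k = 0 then {{}} else if k = 1 then {{a}} else {})"
    unfolding nc_def by (auto simp: s)
  then show ?thesis by (simp add: F_def)
qed

lemma F_k0: "F a n 0 = 1"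
proof -
  have "{S. S \<in> nc {a..<a+n} \<and> card S = 0} = {{}}"
    by (auto simp: nc_def dest: finite_subset[OF _ finite_atLeastLessThan])
  then show ?thesis by (simp add: F_def)
qed

lemma card_insert_img:
  assumes "\<forall>S\<in>Fm. x \<notin> S"
  shows "card (insert x ` Fm) = card Fm"
proof -
  have "inj_on (insert x) Fm"
    unfolding inj_on_def using assms by (metis Diff_insert_absorb)
  then show ?thesis by (rule card_image)
qed

lemma F_rec: "F a (Suc (Suc n)) (Suc k) = F a (Suc n) (Suc k) + F a n k"
proof -
  define X where "X = a + Suc n"
  define A where "A = {S. S \<in> nc {a..<a+Suc n} \<and> card S = Suc k}"
  define B where "B = {S. S \<in> nc {a..<a+n} \<and> card S = k}"
  have fA: "finite A" unfolding A_def by (rule fin_fam)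
  have fB: "finite B" unfolding B_def by (rule fin_fam)
  have XB: "\<forall>S\<in>B. X \<notin> S" by (auto simp: B_def nc_def X_def)
  have eq: "{S. S \<in> nc {a..<a+Suc (Suc n)} \<and> card S = Suc k} = A \<union> insert X ` B"
  proof (rule set_eqI, rule iffI)
    fix S assume S: "S \<in> {S. S \<in> nc {a..<a+Suc (Suc n)} \<and> card S = Suc k}"
    have fS: "finite S" using S by (auto simp: nc_def intro: finite_subset)
    show "S \<in> A \<union> insert X ` B"
    proof (cases "X \<in> S")
      case False
      then have "S \<in> A" using S by (auto simp: A_def nc_def X_def less_Suc_eq)
      then show ?thesis by blast
    next
      case True
      have "a + n \<notin> S" using S True by (auto simp: nc_def X_def)
      then have "S - {X} \<in> B" using S True fS
        by (auto simp: B_def nc_def X_def less_Suc_eq) 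
      moreover have "S = insert X (S - {X})" using True by auto
      ultimately show ?thesis by blast
    qed
  next
    fix S assume "S \<in> A \<union> insert X ` B"
    then show "S \<in> {S. S \<in> nc {a..<a+Suc (Suc n)} \<and> card S = Suc k}"
    proof
      assume "S \<in> A" then show ?thesis by (auto simp: A_def nc_def)
    next
      assume "S \<in> insert X ` B"
      then obtain T where T: "T \<in> B" "S = insert X T" by blast
      have fT: "finite T" using T by (auto simp: B_def nc_def intro: finite_subset)
      have "X \<notin> T" using T XB by auto
      then show ?thesis using T fT by (auto simp: B_def nc_def X_def)
    qed
  qed
  have disj: "A \<inter> insert X ` B = {}" by (auto simp: A_def nc_def X_def)
  have "F a (Suc (Suc n)) (Suc k) = card (A \<union> insert X ` B)" unfolding F_def eq[symmetric] by simp
  also have "\<dots> = card A + card (insert X ` B)"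
    using fA fB disj by (simp add: card_Un_disjoint)
  also have "\<dots> = card A + card B" using card_insert_img[OF XB] by simp
  finally show ?thesis by (simp add: A_def B_def F_def)
qed

lemma F_binom_aux: "(\<forall>k. F a n k = (n + 1 - k) choose k) \<and> (\<forall>k. F a (Suc n) k = (n + 2 - k) choose k)"
proof (induction n)
  case 0
  show ?case
  proof (intro conjI allI)
    fix k show "F a 0 k = (0 + 1 - k) choose k" by (cases k) (auto simp: F0)
    show "F a (Suc 0) k = (0 + 2 - k) choose k"
      using F1[of a k] by (cases k; cases "k - 1") (auto)
  qed
next
  case (Suc n)
  show ?case
  proof (intro conjI allI)
    fix k show "F a (Suc n) k = (Suc n + 1 - k) choose k" using Suc by simp
    show "F a (Suc (Suc n)) k = (Suc n + 2 - k) choose k"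
    proof (cases k)
      case 0 then show ?thesis by (simp add: F_k0)
    next
      case (Suc j)
      have r: "F a (Suc (Suc n)) k = ((n + 2 - Suc j) choose Suc j) + ((n + 1 - j) choose j)"
        using Suc.IH F_rec[of a n j] Suc by simp
      show ?thesis
      proof (cases "j \<le> n + 1")
        case True
        then have "Suc n + 2 - k = Suc (n + 1 - j)" "n + 2 - Suc j = n + 1 - j" using Suc by auto
        then show ?thesis using r Suc by simp
      next
        case False
        then show ?thesis using r Suc by (simp add: binomial_eq_0)
      qed
    qed
  qed
qed

lemma F_binom: "F a n k = (n + 1 - k) choose k"
  using F_binom_aux by blast

lemma cyc_indep:
  assumes "m \<ge> 2"
  shows "indep_set (cycle_V m) (cycle_E m) S \<longleftrightarrow> S \<in> nc {1..m} \<and> \<not> (1 \<in> S \<and> m \<in> S)"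
proof
  assume h: "indep_set (cycle_V m) (cycle_E m) S"
  then have sub: "S \<subseteq> {1..m}" and ne: "\<forall>e\<in>cycle_E m. \<not> e \<subseteq> S"
    by (auto simp: indep_set_def cycle_V_def)
  have "Suc i \<notin> S" if "i \<in> S" for i
  proof
    assume "Suc i \<in> S"
    then have "1 \<le> i" "i \<le> m - 1" using sub that by auto
    then have "{i, i+1} \<in> cycle_E m" unfolding cycle_E_def by blast
    then show False using ne that \<open>Suc i \<in> S\<close> by auto
  qed
  moreover have "\<not> (1 \<in> S \<and> m \<in> S)"
    using ne unfolding cycle_E_def by auto
  ultimately show "S \<in> nc {1..m} \<and> \<not> (1 \<in> S \<and> m \<in> S)" using sub by (auto simp: nc_def)
next
  assume h: "S \<in> nc {1..m} \<and> \<not> (1 \<in> S \<and> m \<in> S)"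
  then show "indep_set (cycle_V m) (cycle_E m) S"
    unfolding indep_set_def cycle_V_def cycle_E_def nc_def by auto
qed

definition cfam :: "nat \<Rightarrow> nat \<Rightarrow> nat set set" where
  "cfam m k = {S. S \<in> nc {1..m} \<and> \<not> (1 \<in> S \<and> m \<in> S) \<and> card S = k}"

lemma cyc_coeff: "m \<ge> 2 \<Longrightarrow> indep_coeff (cycle_V m) (cycle_E m) k = card (cfam m k)"
  unfolding indep_coeff_def cfam_def using cyc_indep by simp

lemma cfam0: "cfam m 0 = {{}}"
  by (auto simp: cfam_def nc_def dest: finite_subset[OF _ finite_atLeastAtMost])

lemma cfam_Suc:
  assumes m: "m \<ge> 5"
  shows "card (cfam m (Suc k)) = F 1 (m-1) (Suc k) + F 2 (m-3) k"
proof -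
  define A where "A = {S. S \<in> nc {1..<1+(m-1)} \<and> card S = Suc k}"
  define B where "B = {S. S \<in> nc {2..<2+(m-3)} \<and> card S = k}"
  have fA: "finite A" unfolding A_def by (rule fin_fam)
  have fB: "finite B" unfolding B_def by (rule fin_fam)
  have XB: "\<forall>S\<in>B. m \<notin> S" using m by (auto simp: B_def nc_def)
  have eq: "cfam m (Suc k) = A \<union> insert m ` B"
  proof (rule set_eqI, rule iffI)
    fix S assume S: "S \<in> cfam m (Suc k)"
    have fS: "finite S" using S by (auto simp: cfam_def nc_def intro: finite_subset)
    show "S \<in> A \<union> insert m ` B"
    proof (cases "m \<in> S")
      case False
      then have "S \<in> A" using S m unfolding A_def nc_def cfam_def
        by (auto simp: subset_iff) (metis atLeastAtMost_iff le_neq_implies_less)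
      then show ?thesis by blast
    next
      case True
      have "m - 1 \<notin> S" using S True m by (auto simp: cfam_def nc_def)
      moreover have "1 \<notin> S" using S True by (auto simp: cfam_def)
      ultimately have sub: "S - {m} \<subseteq> {2..<2+(m-3)}"
      proof -
        assume a: "m - 1 \<notin> S" "1 \<notin> S"
        have "S \<subseteq> {1..m}" using S by (auto simp: cfam_def nc_def)
        show ?thesis
        proof
          fix x assume x: "x \<in> S - {m}"
          then have "1 \<le> x" "x \<le> m" "x \<noteq> 1" "x \<noteq> m - 1" "x \<noteq> m"
            using \<open>S \<subseteq> {1..m}\<close> a by auto
          then show "x \<in> {2..<2+(m-3)}" using m by simp
        qed
      qed
      have "S - {m} \<in> B" using S True fS sub by (auto simp: B_def nc_def cfam_def)
      moreover have "S = insert m (S - {m})" using True by auto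
      ultimately show ?thesis by blast
    qed
  next
    fix S assume "S \<in> A \<union> insert m ` B"
    then show "S \<in> cfam m (Suc k)"
    proof
      assume "S \<in> A" then show ?thesis using m by (auto simp: A_def nc_def cfam_def)
    next
      assume "S \<in> insert m ` B"
      then obtain T where T: "T \<in> B" "S = insert m T" by blast
      have fT: "finite T" using T by (auto simp: B_def nc_def intro: finite_subset)
      have "m \<notin> T" using T XB by auto
      have Tsub: "T \<subseteq> {2..<2+(m-3)}" using T by (auto simp: B_def nc_def)
      have b: "\<And>x. x \<in> T \<Longrightarrow> 2 \<le> x \<and> x < m - 1" using subsetD[OF Tsub] m by fastforce
      have "T \<subseteq> {1..m}" using b by fastforce
      moreover have "1 \<notin> T" "m - 1 \<notin> T" using b by fastforce+
      moreover have "Suc (m - 1) = m" using m by simp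
      ultimately show ?thesis using T fT m \<open>m \<notin> T\<close> unfolding B_def nc_def cfam_def
        by (auto simp: card_insert_if)
    qed
  qed
  have disj: "A \<inter> insert m ` B = {}" by (auto simp: A_def nc_def)
  have "card (cfam m (Suc k)) = card A + card (insert m ` B)"
    using fA fB disj eq by (simp add: card_Un_disjoint)
  also have "\<dots> = card A + card B" using card_insert_img[OF XB] by simp
  finally show ?thesis by (simp add: A_def B_def F_def)
qed

definition tind :: "nat \<Rightarrow> (nat + nat) set \<Rightarrow> bool" where
  "tind m S \<longleftrightarrow> S \<subseteq> Inl ` {1..m} \<union> Inr ` {1,2} \<and> {i. Inl i \<in> S} \<in> nc {1..m}
     \<and> \<not> (Inl 1 \<in> S \<and> Inl m \<in> S) \<and> \<not> (Inr 1 \<in> S \<and> Inr 2 \<in> S) \<and> \<not> (Inl m \<in> S \<and> Inr 1 \<in> S)"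

lemma tad_indep:
  assumes "m \<ge> 2"
  shows "indep_set (tadpole_V m 2) (tadpole_E m 2) S \<longleftrightarrow> tind m S"
proof
  assume h: "indep_set (tadpole_V m 2) (tadpole_E m 2) S"
  then have sub: "S \<subseteq> Inl ` {1..m} \<union> Inr ` {1,2}" and ne: "\<forall>e\<in>tadpole_E m 2. \<not> e \<subseteq> S"
    by (auto simp: indep_set_def tadpole_V_def)
  have "Suc i \<notin> {i. Inl i \<in> S}" if "i \<in> {i. Inl i \<in> S}" for i
  proof
    assume "Suc i \<in> {i. Inl i \<in> S}"
    then have "1 \<le> i" "i \<le> m - 1" using sub that by auto
    then have "{Inl i, Inl (i+1)} \<in> tadpole_E m 2" unfolding tadpole_E_def by blast
    then show False using ne that \<open>Suc i \<in> {i. Inl i \<in> S}\<close> by auto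
  qed
  moreover have "{i. Inl i \<in> S} \<subseteq> {1..m}" using sub by auto
  moreover have "{Inr 1, Inr 2} \<in> tadpole_E m 2" "{Inl m, Inl 1} \<in> tadpole_E m 2"
     "{Inl m, Inr 1} \<in> tadpole_E m 2" unfolding tadpole_E_def by auto
  then have "\<not> {Inr 1, Inr 2} \<subseteq> S" "\<not> {Inl m, Inl 1} \<subseteq> S" "\<not> {Inl m, Inr 1} \<subseteq> S"
    using ne by blast+
  ultimately show "tind m S" using sub unfolding tind_def nc_def
    by auto
next
  assume h: "tind m S"
  then show "indep_set (tadpole_V m 2) (tadpole_E m 2) S"
    unfolding indep_set_def tadpole_V_def tadpole_E_def tind_def nc_def by auto
qed

definition tfam :: "nat \<Rightarrow> nat \<Rightarrow> (nat + nat) set set" where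
  "tfam m k = {S. tind m S \<and> card S = k}"

lemma tad_coeff: "m \<ge> 2 \<Longrightarrow> indep_coeff (tadpole_V m 2) (tadpole_E m 2) k = card (tfam m k)"
  unfolding indep_coeff_def tfam_def using tad_indep by simp

lemma tfin: "tind m S \<Longrightarrow> finite S"
  unfolding tind_def by (meson finite_Un finite_imageI finite_atLeastAtMost finite.intros finite_subset)

lemma tfam0: "tfam m 0 = {{}}"
proof -
  have "tind m S \<and> card S = 0 \<longleftrightarrow> S = {}" for S
    using tfin[of m S] by (auto simp: tind_def nc_def)
  then show ?thesis by (auto simp: tfam_def)
qed

lemma card_imgInl: "card (image Inl ` X) = card X"
  by (rule card_image) (auto simp: inj_on_def inj_image_eq_iff)

lemma card_imgInl': "card (Inl ` A) = card A"
  by (rule card_image) auto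

lemma card_insInr[simp]: "finite A \<Longrightarrow> card (insert (Inr j) (Inl ` A)) = Suc (card A)"
  by (simp add: card_insert_if card_imgInl' image_iff)

lemma tfam_Suc:
  assumes m: "m \<ge> 5"
  shows "card (tfam m (Suc k)) = card (cfam m (Suc k)) + card (cfam m k) + F 1 (m-1) k"
proof -
  define P where "P = {A. A \<in> nc {1..<1+(m-1)} \<and> card A = k}"
  define X0 :: "(nat+nat) set set" where "X0 = image Inl ` cfam m (Suc k)"
  define X1 :: "(nat+nat) set set" where "X1 = insert (Inr 2) ` image Inl ` cfam m k"
  define X2 :: "(nat+nat) set set" where "X2 = insert (Inr 1) ` image Inl ` P"
  have finc: "finite (cfam m j)" for j
  proof -
    have "cfam m j \<subseteq> Pow {1..m}" by (auto simp: cfam_def nc_def)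
    then show ?thesis by (rule finite_subset) simp
  qed
  have fP: "finite P" unfolding P_def by (rule fin_fam)
  have f0: "finite X0" "finite X1" "finite X2" using finc fP by (auto simp: X0_def X1_def X2_def)
  have c0: "card X0 = card (cfam m (Suc k))" by (simp add: X0_def card_imgInl)
  have c1: "card X1 = card (cfam m k)" unfolding X1_def
    by (subst card_insert_img) (auto simp: card_imgInl)
  have c2: "card X2 = card P" unfolding X2_def
    by (subst card_insert_img) (auto simp: card_imgInl)
  have i2: "\<forall>S\<in>X2. Inr 1 \<in> S" "\<forall>S\<in>X0 \<union> X1. Inr 1 \<notin> S" by (auto simp: X0_def X1_def X2_def)
  have d: "X0 \<inter> X1 = {}" "(X0 \<union> X1) \<inter> X2 = {}" 
    apply (auto simp: X0_def X1_def)[1] using i2 by blast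
  have eq: "tfam m (Suc k) = X0 \<union> X1 \<union> X2"
  proof (rule set_eqI, rule iffI)
    fix S assume S: "S \<in> tfam m (Suc k)"
    define A where "A = {i. Inl i \<in> S}"
    have tS: "tind m S" and cS: "card S = Suc k" using S by (auto simp: tfam_def)
    have fS: "finite S" using tS by (rule tfin)
    have fA: "finite A" using tS unfolding A_def tind_def nc_def by (auto intro: finite_subset)
    have Acyc: "A \<in> nc {1..m}" "\<not> (1 \<in> A \<and> m \<in> A)" using tS by (auto simp: A_def tind_def)
    have decomp: "S = Inl ` A \<union> (S \<inter> Inr ` {1,2})"
      using tS unfolding tind_def A_def by auto
    consider "Inr 1 \<notin> S" "Inr 2 \<notin> S" | "Inr 2 \<in> S" | "Inr 1 \<in> S"
      by blast
    then show "S \<in> X0 \<union> X1 \<union> X2"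
    proof cases
      case 1
      then have "S = Inl ` A" using decomp by auto
      then have "A \<in> cfam m (Suc k)" using Acyc cS by (simp add: cfam_def card_imgInl')
      then show ?thesis using \<open>S = Inl ` A\<close> by (auto simp: X0_def)
    next
      case 2
      then have "Inr 1 \<notin> S" using tS by (auto simp: tind_def)
      then have "S = insert (Inr 2) (Inl ` A)" using decomp 2 by auto
      then have "card S = Suc (card A)" using fA by (simp add: card_insert_if card_imgInl' image_iff)
      then have "A \<in> cfam m k" using Acyc cS by (simp add: cfam_def)
      then show ?thesis using \<open>S = insert (Inr 2) (Inl ` A)\<close> by (auto simp: X1_def)
    next
      case 3
      then have "Inr 2 \<notin> S" "m \<notin> A" using tS by (auto simp: tind_def A_def)
      then have "S = insert (Inr 1) (Inl ` A)" using decomp 3 by auto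
      then have "card S = Suc (card A)" using fA by (simp add: card_insert_if card_imgInl' image_iff)
      moreover have "A \<subseteq> {1..<1+(m-1)}" using Acyc \<open>m \<notin> A\<close> m
        by (auto simp: nc_def subset_iff) (metis atLeastAtMost_iff le_neq_implies_less)
      ultimately have "A \<in> P" using Acyc cS by (auto simp: P_def nc_def)
      then show ?thesis using \<open>S = insert (Inr 1) (Inl ` A)\<close> by (auto simp: X2_def)
    qed
  next
    fix S assume "S \<in> X0 \<union> X1 \<union> X2"
    then consider A where "A \<in> cfam m (Suc k)" "S = Inl ` A"
      | A where "A \<in> cfam m k" "S = insert (Inr 2) (Inl ` A)"
      | A where "A \<in> P" "S = insert (Inr 1) (Inl ` A)"
      unfolding X0_def X1_def X2_def by blast
    then show "S \<in> tfam m (Suc k)"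
    proof cases
      case 1
      then show ?thesis by (auto simp: tfam_def tind_def cfam_def card_imgInl' nc_def)
    next
      case 2
      have "finite A" using 2 finite_subset[of A "{1..m}"] by (auto simp: cfam_def nc_def)
      then show ?thesis using 2 by (auto simp: tfam_def tind_def cfam_def card_imgInl' nc_def)
    next
      case 3
      have "finite A" using 3 by (auto simp: P_def nc_def intro: finite_subset)
      moreover have "A \<subseteq> {1..<m}" using 3 m by (auto simp: P_def nc_def)
      ultimately show ?thesis using 3 by (auto simp: tfam_def tind_def P_def card_imgInl' nc_def)
    qed
  qed
  have "card (tfam m (Suc k)) = card X0 + card X1 + card X2"
    using eq f0 d by (simp add: card_Un_disjoint)
  then show ?thesis using c0 c1 c2 by (simp add: P_def F_def)
qed

lemma absorb: "Suc k * (n choose Suc k) = (n - k) * (n choose k)"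
  by (simp only: binomial_absorption binomial_absorb_comp)

definition pp :: "nat \<Rightarrow> nat \<Rightarrow> nat" where "pp m k = (m - k) choose k"
definition cc :: "nat \<Rightarrow> nat \<Rightarrow> nat" where "cc m k = card (cfam m k)"
definition tt :: "nat \<Rightarrow> nat \<Rightarrow> nat" where "tt m k = card (tfam m k)"

lemma cc0: "cc m 0 = 1" by (simp add: cc_def cfam0)
lemma tt0: "tt m 0 = 1" by (simp add: tt_def tfam0)

lemma ccS: "m \<ge> 5 \<Longrightarrow> cc m (Suc k) = ((m - Suc k) choose Suc k) + ((m - 2 - k) choose k)"
  unfolding cc_def using cfam_Suc[of m k] by (simp add: F_binom numeral_3_eq_3)

lemma ttS: "m \<ge> 5 \<Longrightarrow> tt m (Suc k) = cc m (Suc k) + cc m k + pp m k"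
  unfolding tt_def cc_def pp_def using tfam_Suc[of m k] by (simp add: F_binom)

lemma F1id: assumes "m \<ge> 5" shows "cc m k * (m - k) = m * pp m k"
proof (cases k)
  case 0 then show ?thesis by (simp add: cc0 pp_def)
next
  case (Suc j)
  show ?thesis
  proof (cases "m \<ge> j + 2")
    case True
    define a where "a = m - j - 2"
    have a: "m = a + j + 2" using True by (simp add: a_def)
    have e1: "m - Suc j = Suc a" "m - 2 - j = a" "m - k = Suc a" using a Suc by auto
    have h: "(a choose j) * Suc a = (Suc a choose Suc j) * Suc j"
      using Suc_times_binomial_eq[of a j] by (simp only: mult.commute)
    have cc: "cc m k = (Suc a choose Suc j) + (a choose j)" using ccS[OF assms, of j] e1 Suc by simp
    have "cc m k * (m - k) = (Suc a choose Suc j) * Suc a + (a choose j) * Suc a"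
      using cc e1 by (simp add: add_mult_distrib)
    also have "\<dots> = (Suc a choose Suc j) * (Suc a + Suc j)" using h by (simp add: add_mult_distrib2)
    also have "\<dots> = m * pp m k" using a e1 Suc by (simp add: pp_def)
    finally show ?thesis .
  next
    case False
    then have "m - k = 0" using Suc by auto
    moreover have "pp m k = 0" using False Suc by (simp add: pp_def)
    ultimately show ?thesis by simp
  qed
qed

lemma PAid: "pp m (Suc k) * Suc k * (m - k) = pp m k * (m - 2*k) * (m - 2*k - 1)"
proof (cases "m \<ge> 2*k+1")
  case True
  define a where "a = m - (2*k+1)"
  have a: "m = 2*k+1+a" using True by (simp add: a_def)
  have e: "m - Suc k = a + k" "m - k = Suc (a + k)" "m - 2*k = Suc a" using a by auto
  have h1: "Suc k * ((a+k) choose Suc k) = a * ((a+k) choose k)" using absorb[of k "a+k"] by simp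
  have h2: "(Suc a) * (Suc (a+k) choose k) = Suc (a+k) * ((a+k) choose k)"
    using absorb[of k "Suc (a+k)"] binomial_absorb_comp[of "Suc (a+k)" k] by simp
  have "pp m (Suc k) * Suc k * (m - k) = a * ((a+k) choose k) * Suc (a+k)"
    using h1 by (simp add: pp_def e mult.commute)
  also have "\<dots> = a * (Suc (a+k) * ((a+k) choose k))" by (simp only: mult_ac)
  also have "\<dots> = a * ((Suc a) * (Suc (a+k) choose k))" by (simp only: h2)
  also have "\<dots> = pp m k * (m - 2*k) * (m - 2*k - 1)" by (simp add: pp_def e)
  finally show ?thesis .
next
  case False
  then have "pp m (Suc k) = 0" by (simp add: pp_def)
  then show ?thesis using False by simp
qed

lemma pp_pos: "pp m k > 0 \<longleftrightarrow> 2*k \<le> m"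
  by (auto simp: pp_def)

lemma cc_pos: assumes "m \<ge> 5" shows "cc m k > 0 \<longleftrightarrow> 2*k \<le> m"
proof (cases k)
  case 0 then show ?thesis by (simp add: cc0)
next
  case (Suc j) then show ?thesis using assms by (auto simp: ccS)
qed

lemma CYid: assumes m: "m \<ge> 5"
  shows "cc m (Suc k) * Suc k * (m - k - 1) = cc m k * (m - 2*k) * (m - 2*k - 1)"
proof (cases "k < m")
  case True
  have mk: "m - k - 1 = m - Suc k" by simp
  have "cc m (Suc k) * Suc k * (m - k - 1) * (m - k) = (cc m (Suc k) * (m - Suc k)) * Suc k * (m - k)"
    unfolding mk by (simp only: mult_ac)
  also have "\<dots> = m * (pp m (Suc k) * Suc k * (m - k))" using F1id[OF m, of "Suc k"] by (simp only: mult_ac)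
  also have "\<dots> = m * (pp m k * (m - 2*k) * (m - 2*k - 1))" by (simp only: PAid)
  also have "\<dots> = (m * pp m k) * (m - 2*k) * (m - 2*k - 1)" by (simp only: mult_ac)
  also have "\<dots> = (cc m k * (m - k)) * (m - 2*k) * (m - 2*k - 1)" using F1id[OF m, of k] by simp
  finally have "cc m (Suc k) * Suc k * (m - k - 1) * (m - k) = cc m k * (m - 2*k) * (m - 2*k - 1) * (m - k)"
    by (simp only: mult_ac)
  then show ?thesis using True by simp
next
  case False then show ?thesis by simp
qed

lemma Dprop: assumes m: "m \<ge> 5" and h: "cc m (Suc k) \<le> cc m k"
  shows "cc m (Suc (Suc k)) \<le> cc m (Suc k)"
proof (cases "2 * Suc (Suc k) \<le> m")
  case False
  then have "cc m (Suc (Suc k)) = 0" using cc_pos[OF m, of "Suc (Suc k)"] by simp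
  then show ?thesis by simp
next
  case True
  define v where "v = m - (2*k+4)"
  have v: "m = 2*k+4+v" using True by (simp add: v_def)
  have p1: "cc m (Suc k) > 0" "cc m k > 0" using cc_pos[OF m] v by auto
  have e1: "m - k - 1 = k+3+v" "m - 2*k = v+4" "m - Suc k - 1 = k+2+v" "m - 2*Suc k = v+2" using v by simp_all
  have e2: "v+4-1 = v+3" "v+2-1 = v+1" by simp_all
  have cy0': "cc m (Suc k) * Suc k * (k+3+v) = cc m k * (v+4) * (v+3)"
    using CYid[OF m, of k] unfolding e1 e2 .
  have cy1': "cc m (Suc (Suc k)) * Suc (Suc k) * (k+2+v) = cc m (Suc k) * (v+2) * (v+1)"
    using CYid[OF m, of "Suc k"] unfolding e1 e2 .
  have cy0: "cc m (Suc k) * ((k+1) * (k+3+v)) = cc m k * ((v+4)*(v+3))"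
    using cy0' by (simp only: mult.assoc Suc_eq_plus1)
  have cy1: "cc m (Suc (Suc k)) * ((k+2) * (k+2+v)) = cc m (Suc k) * ((v+2)*(v+1))"
    using cy1' by (simp only: mult.assoc add_2_eq_Suc')
  have "cc m k * ((v+4)*(v+3)) \<le> cc m k * ((k+1) * (k+3+v))"
    using cy0 h by (metis mult_le_mono1)
  then have AB: "(v+4)*(v+3) \<le> (k+1) * (k+3+v)" using p1 by simp
  have "(v+2)*(v+1) \<le> (k+2)*(k+2+v)"
  proof -
    have "(v+2)*(v+1) \<le> (v+4)*(v+3)" by (intro mult_mono) auto
    moreover have "(k+1)*(k+3+v) \<le> (k+2)*(k+2+v)" by (simp add: algebra_simps)
    ultimately show ?thesis using AB by linarith
  qed
  then have "cc m (Suc (Suc k)) * ((k+2) * (k+2+v)) \<le> cc m (Suc k) * ((k+2) * (k+2+v))"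
    using cy1 by (metis mult_le_mono2)
  then show ?thesis by (rule mult_right_le_imp_le) simp
qed

lemma ar2: assumes "(v+2)*(v+1) > (j+2)*(j+v+2)" shows "(v+4)*(v+3) \<ge> (j+1)*((j::nat)+v+4)"
proof (cases "j \<le> 5*v+10")
  case True
  have e: "int ((v+4)*(v+3)) - int ((j+1)*(j+v+4)) = (int ((v+2)*(v+1)) - int ((j+2)*(j+v+2))) + (5*int v+10 - int j)"
    by (simp add: algebra_simps)
  show ?thesis using e True assms by linarith
next
  case False
  then have "(j+2)*(j+v+2) \<ge> (5*v+10)*(5*v+10)" by (intro mult_mono) auto
  moreover have "(5*v+10)*(5*v+10) \<ge> (v+2)*(v+1)" by (intro mult_mono) auto
  ultimately show ?thesis using assms by linarith
qed

lemma Lprop: assumes m: "m \<ge> 5" and h: "cc m (Suc j) < cc m (Suc (Suc j))"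
  shows "pp m j \<le> pp m (Suc j)"
proof -
  have "cc m (Suc (Suc j)) > 0" using h by simp
  then have "2 * Suc (Suc j) \<le> m" using cc_pos[OF m] by blast
  define v where "v = m - (2*j+4)"
  have v: "m = 2*j+4+v" using \<open>2 * Suc (Suc j) \<le> m\<close> by (simp add: v_def)
  have p1: "cc m (Suc j) > 0" using cc_pos[OF m] v by auto
  have e1: "m - Suc j - 1 = j+2+v" "m - 2*Suc j = v+2" using v by simp_all
  have e2: "v+2-1 = v+1" by simp_all
  have cy1': "cc m (Suc (Suc j)) * Suc (Suc j) * (j+2+v) = cc m (Suc j) * (v+2) * (v+1)"
    using CYid[OF m, of "Suc j"] unfolding e1 e2 .
  have cy1: "cc m (Suc (Suc j)) * ((j+2) * (j+2+v)) = cc m (Suc j) * ((v+2)*(v+1))"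
    using cy1' by (simp only: mult.assoc add_2_eq_Suc')
  have "cc m (Suc j) * ((j+2) * (j+2+v)) < cc m (Suc j) * ((v+2)*(v+1))"
  proof -
    have "cc m (Suc j) * ((j+2) * (j+2+v)) < cc m (Suc (Suc j)) * ((j+2) * (j+2+v))"
      using h by (intro mult_strict_right_mono) auto
    then show ?thesis using cy1 by simp
  qed
  then have "(j+2)*(j+2+v) < (v+2)*(v+1)" using p1 by (simp only: mult_less_cancel1)
  then have "(j+2)*(j+v+2) < (v+2)*(v+1)" by (simp add: add_ac)
  then have ineq: "(j+1)*(j+v+4) \<le> (v+4)*(v+3)" by (rule ar2)
  have e3: "m - j = j+v+4" "m - 2*j = v+4" using v by simp_all
  have e4: "v+4-1 = v+3" by simp
  have pa': "pp m (Suc j) * Suc j * (j+v+4) = pp m j * (v+4) * (v+3)"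
    using PAid[of m j] unfolding e3 e4 .
  have pa: "pp m (Suc j) * ((j+1) * (j+v+4)) = pp m j * ((v+4)*(v+3))"
    using pa' by (simp only: mult.assoc Suc_eq_plus1)
  have "pp m j * ((j+1) * (j+v+4)) \<le> pp m j * ((v+4)*(v+3))" using ineq by simp
  then have "pp m j * ((j+1) * (j+v+4)) \<le> pp m (Suc j) * ((j+1) * (j+v+4))" using pa by simp
  then show ?thesis by simp
qed

lemma pdesc: assumes m: "m \<ge> 5" and h: "cc m (Suc j) \<le> cc m j"
  shows "pp m (Suc j) \<le> pp m j"
proof -
  have "m * pp m (Suc j) = cc m (Suc j) * (m - Suc j)" using F1id[OF m] by simp
  also have "\<dots> \<le> cc m j * (m - j)" using h by (intro mult_mono) auto
  also have "\<dots> = m * pp m j" using F1id[OF m] by simp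
  finally show ?thesis using m by simp
qed

lemma is_mode_unique: assumes "is_mode a i" "is_mode a j" shows "i = j"
proof (rule ccontr)
  assume "i \<noteq> j"
  then consider "i < j" | "j < i" by linarith
  then show False
  proof cases
    case 1
    then have "a j \<le> a (j - 1)" using assms(1) unfolding is_mode_def
      by (metis Suc_diff_1 le_add1 less_imp_Suc_add not_less0 plus_1_eq_Suc le_eq_less_or_eq less_Suc_eq_le gr0I)
    moreover have "a (j - 1) < a j" using assms(2) 1 unfolding is_mode_def by (metis not_less0)
    ultimately show False by simp
  next
    case 2
    then have "a i \<le> a (i - 1)" using assms(2) unfolding is_mode_def
      by (metis Suc_diff_1 le_add1 less_imp_Suc_add not_less0 plus_1_eq_Suc le_eq_less_or_eq less_Suc_eq_le gr0I)
    moreover have "a (i - 1) < a i" using assms(1) 2 unfolding is_mode_def by (metis not_less0)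
    ultimately show False by simp
  qed
qed

lemma mode_eq: "is_mode a i \<Longrightarrow> mode a = i"
  unfolding mode_def using is_mode_unique by blast

lemma main:
  assumes m: "m \<ge> 5"
  shows "unimodal (tt m) \<and> mode (tt m) \<in> {mode (cc m), mode (cc m) + 1}"
proof -
  define r where "r = (LEAST k. cc m (Suc k) \<le> cc m k)"
  have ex: "cc m (Suc m) \<le> cc m m"
  proof -
    have "cc m (Suc m) = 0" using cc_pos[OF m, of "Suc m"] by simp
    then show ?thesis by simp
  qed
  have rdesc0: "cc m (Suc r) \<le> cc m r" unfolding r_def by (rule LeastI[of _ m]) (rule ex)
  have desc: "cc m (Suc j) \<le> cc m j" if "j \<ge> r" for j
    using that
  proof (induction j rule: dec_induct)
    case base then show ?case by (rule rdesc0)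
  next
    case (step n) then show ?case using Dprop[OF m] by blast
  qed
  have asc: "cc m j < cc m (Suc j)" if "j < r" for j
    using not_less_Least[of j "\<lambda>k. cc m (Suc k) \<le> cc m k"] that unfolding r_def by simp
  have c1: "cc m 1 = m" using ccS[OF m, of 0] m by simp
  have r0: "r \<noteq> 0"
  proof
    assume "r = 0"
    then have "cc m 1 \<le> cc m 0" using rdesc0 by simp
    then show False using c1 cc0 m by simp
  qed
  have cmode: "is_mode (cc m) r"
    unfolding is_mode_def using r0 asc[of "r - 1"] desc by simp
  then have mc: "mode (cc m) = r" by (rule mode_eq)
  have tasc: "tt m k < tt m (Suc k)" if "k < r" for k
  proof (cases k)
    case 0 then show ?thesis using ttS[OF m, of 0] tt0 c1 cc0 m by simp
  next
    case (Suc j)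
    have a1: "cc m (Suc j) < cc m (Suc (Suc j))" using asc[of "Suc j"] that Suc by simp
    have a2: "cc m j \<le> cc m (Suc j)" using asc[of j] that Suc by simp
    have a3: "pp m j \<le> pp m (Suc j)" using Lprop[OF m a1] .
    show ?thesis using a1 a2 a3 ttS[OF m, of j] ttS[OF m, of "Suc j"] Suc by simp
  qed
  have tdesc: "tt m (Suc k) \<le> tt m k" if "k \<ge> Suc r" for k
  proof -
    define j where "j = k - 1"
    have j: "k = Suc j" "j \<ge> r" using that by (auto simp: j_def)
    have "cc m (Suc (Suc j)) \<le> cc m (Suc j)" using desc[of "Suc j"] j by simp
    moreover have "cc m (Suc j) \<le> cc m j" using desc[of j] j by simp
    moreover have "pp m (Suc j) \<le> pp m j" using pdesc[OF m] desc[of j] j by simp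
    ultimately show ?thesis using ttS[OF m, of j] ttS[OF m, of "Suc j"] j by simp
  qed
  show ?thesis
  proof (cases "tt m r < tt m (Suc r)")
    case True
    have uni: "unimodal (tt m)"
      unfolding unimodal_def
      by (rule exI[of _ "Suc r"]) (metis True less_Suc_eq less_imp_le_nat tasc tdesc)
    have "is_mode (tt m) (Suc r)" unfolding is_mode_def using True tdesc by simp
    then have "mode (tt m) = Suc r" by (rule mode_eq)
    then show ?thesis using uni mc by simp
  next
    case False
    then have tr: "tt m (Suc r) \<le> tt m r" by simp
    have d2: "tt m (Suc k) \<le> tt m k" if "k \<ge> r" for k
      using that tr tdesc by (cases "k = r") auto
    have uni: "unimodal (tt m)"
      unfolding unimodal_def
      by (rule exI[of _ r]) (metis d2 less_imp_le_nat tasc)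
    have "is_mode (tt m) r" unfolding is_mode_def using r0 tasc[of "r - 1"] d2 by simp
    then have "mode (tt m) = r" by (rule mode_eq)
    then show ?thesis using uni mc by simp
  qed
qed

theorem proposition3p2:
  fixes m :: nat
  assumes "m \<ge> 5"
  shows "unimodal (indep_coeff (tadpole_V m 2) (tadpole_E m 2))
       \<and> mode (indep_coeff (tadpole_V m 2) (tadpole_E m 2))
           \<in> {mode (indep_coeff (cycle_V m) (cycle_E m)),
              mode (indep_coeff (cycle_V m) (cycle_E m)) + 1}"
proof -
  have m2: "m \<ge> 2" using assms by simp
  have "indep_coeff (tadpole_V m 2) (tadpole_E m 2) = tt m"
    by (rule ext) (simp add: tad_coeff[OF m2] tt_def)
  moreover have "indep_coeff (cycle_V m) (cycle_E m) = cc m"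
    by (rule ext) (simp add: cyc_coeff[OF m2] cc_def)
  ultimately show ?thesis using main[OF assms] by simp
qed

end
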